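(* Let $K$ be a compact Hausdorff space having the extension property and let $I$ be any set. Then every isometric copy of $c_0(I)$ in $C(K)$ is complemented; i.e., for every linear isometric embedding $S:c_0(I)\to C(K)$, the image of $S$ is complemented in $C(K)$.
   Context: $C(K)$ denotes the Banach space of real-valued continuous functions on $K$ with the supremum norm. For a closed set $F\subseteq K$, an extension operator for $F$ in $K$ is a bounded linear map $E:C(F)\to C(K)$ such that $E(f)|_F=f$ for all $f\in C(F)$. $K$ has the extension property if every nonempty closed subset of $K$ admits an extension operator in $K$. *)

theory Defs
  imports "HOL-Analysis.Analysis"
begin

text \<open>C(F) for a subset F of the space X: real-valued continuous functions on F
  (with the subspace topology), normalised to be 0 outside F.\<close>
definition cfun :: "'a topology \<Rightarrow> 'a set \<Rightarrow> ('a \<Rightarrow> real) set" where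
  "cfun X F = {f. continuous_map (subtopology X F) euclideanreal f \<and> (\<forall>x. x \<notin> F \<longrightarrow> f x = 0)}"

definition supn :: "'a set \<Rightarrow> ('a \<Rightarrow> real) \<Rightarrow> real" where
  "supn S f = Sup (insert 0 ((\<lambda>x. \<bar>f x\<bar>) ` S))"

definition linear_on :: "('a \<Rightarrow> real) set \<Rightarrow> (('a \<Rightarrow> real) \<Rightarrow> ('b \<Rightarrow> real)) \<Rightarrow> bool" where
  "linear_on V T \<longleftrightarrow>
     (\<forall>f\<in>V. \<forall>g\<in>V. T (\<lambda>x. f x + g x) = (\<lambda>y. T f y + T g y)) \<and>
     (\<forall>c. \<forall>f\<in>V. T (\<lambda>x. c * f x) = (\<lambda>y. c * T f y))"

definition extension_operator :: "'a topology \<Rightarrow> 'a set \<Rightarrow> (('a \<Rightarrow> real) \<Rightarrow> ('a \<Rightarrow> real)) \<Rightarrow> bool" where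
  "extension_operator X F E \<longleftrightarrow>
     (\<forall>f\<in>cfun X F. E f \<in> cfun X (topspace X)) \<and>
     linear_on (cfun X F) E \<and>
     (\<exists>B. \<forall>f\<in>cfun X F. supn (topspace X) (E f) \<le> B * supn F f) \<and>
     (\<forall>f\<in>cfun X F. \<forall>x\<in>F. E f x = f x)"

definition extension_property :: "'a topology \<Rightarrow> bool" where
  "extension_property X \<longleftrightarrow>
     (\<forall>F. closedin X F \<and> F \<noteq> {} \<longrightarrow> (\<exists>E. extension_operator X F E))"

definition c0 :: "'i set \<Rightarrow> ('i \<Rightarrow> real) set" where
  "c0 I = {u. (\<forall>i. i \<notin> I \<longrightarrow> u i = 0) \<and> (\<forall>e>0. finite {i\<in>I. e \<le> \<bar>u i\<bar>})}"

definition lin_isometric_embedding ::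
  "'i set \<Rightarrow> 'a topology \<Rightarrow> (('i \<Rightarrow> real) \<Rightarrow> ('a \<Rightarrow> real)) \<Rightarrow> bool" where
  "lin_isometric_embedding I X S \<longleftrightarrow>
     (\<forall>u\<in>c0 I. S u \<in> cfun X (topspace X)) \<and>
     linear_on (c0 I) S \<and>
     (\<forall>u\<in>c0 I. supn (topspace X) (S u) = supn I u)"

definition complemented_in :: "'a topology \<Rightarrow> ('a \<Rightarrow> real) set \<Rightarrow> bool" where
  "complemented_in X V \<longleftrightarrow>
     (\<exists>P. (\<forall>f\<in>cfun X (topspace X). P f \<in> cfun X (topspace X)) \<and>
          linear_on (cfun X (topspace X)) P \<and>
          (\<exists>B. \<forall>f\<in>cfun X (topspace X). supn (topspace X) (P f) \<le> B * supn (topspace X) f) \<and>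
          P ` cfun X (topspace X) = V \<and>
          (\<forall>f\<in>V. P f = f))"

end

theory Submission
  imports Defs
begin


lemma supn_ge:
  assumes "bdd_above ((\<lambda>x. \<bar>f x\<bar>) ` S)" "x \<in> S"
  shows "\<bar>f x\<bar> \<le> supn S f"
  unfolding supn_def using assms by (intro cSup_upper) auto

lemma supn_nonneg:
  assumes "bdd_above ((\<lambda>x. \<bar>f x\<bar>) ` S)"
  shows "0 \<le> supn S f"
  unfolding supn_def using assms by (intro cSup_upper) auto

lemma supn_le:
  assumes "0 \<le> B" "\<And>x. x \<in> S \<Longrightarrow> \<bar>f x\<bar> \<le> B"
  shows "supn S f \<le> B"
  unfolding supn_def using assms by (intro cSup_least) auto

lemma cont_bdd:
  assumes "compact_space X" "continuous_map X euclideanreal f"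
  shows "bdd_above ((\<lambda>x. \<bar>f x\<bar>) ` topspace X)"
proof -
  have "continuous_map X euclideanreal (\<lambda>x. \<bar>f x\<bar>)"
    using assms(2) by (intro continuous_intros)
  then have "compactin euclideanreal ((\<lambda>x. \<bar>f x\<bar>) ` topspace X)"
    using assms(1) image_compactin compact_space_def by blast
  then show ?thesis by (simp add: compact_imp_bounded bounded_imp_bdd_above)
qed

lemma cont_attains:
  assumes "compact_space X" "continuous_map X euclideanreal f" "topspace X \<noteq> {}"
  shows "\<exists>x\<in>topspace X. \<bar>f x\<bar> = supn (topspace X) f"
proof -
  have "continuous_map X euclideanreal (\<lambda>x. \<bar>f x\<bar>)"
    using assms(2) by (intro continuous_intros)
  then have "compact ((\<lambda>x. \<bar>f x\<bar>) ` topspace X)"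
    using assms(1) image_compactin compact_space_def compactin_euclidean_iff by blast
  then obtain s where s: "s \<in> (\<lambda>x. \<bar>f x\<bar>) ` topspace X" "\<forall>t\<in>(\<lambda>x. \<bar>f x\<bar>) ` topspace X. t \<le> s"
    using compact_attains_sup assms(3) by blast
  then obtain x where x: "x \<in> topspace X" "s = \<bar>f x\<bar>" by auto
  have "supn (topspace X) f = s"
    unfolding supn_def using s x
    by (intro cSup_eq_maximum) auto
  then show ?thesis using x by auto
qed

lemma c0_bdd:
  assumes "u \<in> c0 I"
  shows "bdd_above ((\<lambda>x. \<bar>u x\<bar>) ` I)"
proof -
  define A where "A = {i\<in>I. 1 \<le> \<bar>u i\<bar>}"
  have "finite A" using assms unfolding c0_def A_def by auto
  have "\<bar>u i\<bar> \<le> max 1 (Max (insert 0 ((\<lambda>i. \<bar>u i\<bar>) ` A)))" if "i \<in> I" for i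
  proof (cases "i \<in> A")
    case True
    then have "\<bar>u i\<bar> \<le> Max (insert 0 ((\<lambda>i. \<bar>u i\<bar>) ` A))"
      using \<open>finite A\<close> by (intro Max_ge) auto
    then show ?thesis by linarith
  next
    case False
    then show ?thesis using that A_def by auto
  qed
  then show ?thesis by (auto simp: bdd_above_def)
qed

lemma cfun_top: "cfun X (topspace X) = {f. continuous_map X euclideanreal f \<and> (\<forall>x. x \<notin> topspace X \<longrightarrow> f x = 0)}"
  by (simp add: cfun_def)

lemma lin_add: "linear_on V T \<Longrightarrow> f \<in> V \<Longrightarrow> g \<in> V \<Longrightarrow> T (\<lambda>x. f x + g x) = (\<lambda>y. T f y + T g y)"
  by (simp add: linear_on_def)

lemma lin_scale: "linear_on V T \<Longrightarrow> f \<in> V \<Longrightarrow> T (\<lambda>x. c * f x) = (\<lambda>y. c * T f y)"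
  by (simp add: linear_on_def)



lemma c0_sum:
  assumes "u \<in> c0 I" "v \<in> c0 I" shows "(\<lambda>j. u j + v j) \<in> c0 I"
proof -
  have "finite {i\<in>I. e \<le> \<bar>u i + v i\<bar>}" if "e > 0" for e
  proof -
    have "{i\<in>I. e \<le> \<bar>u i + v i\<bar>} \<subseteq> {i\<in>I. e/2 \<le> \<bar>u i\<bar>} \<union> {i\<in>I. e/2 \<le> \<bar>v i\<bar>}"
      by auto
    moreover have "finite {i\<in>I. e/2 \<le> \<bar>u i\<bar>}" "finite {i\<in>I. e/2 \<le> \<bar>v i\<bar>}"
      using assms \<open>e > 0\<close> half_gt_zero[of e] unfolding c0_def by blast+
    then have "finite ({i\<in>I. e/2 \<le> \<bar>u i\<bar>} \<union> {i\<in>I. e/2 \<le> \<bar>v i\<bar>})" by simp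
    ultimately show ?thesis by (rule finite_subset)
  qed
  then show ?thesis using assms unfolding c0_def by auto
qed

lemma c0_scale:
  assumes "u \<in> c0 I" shows "(\<lambda>j. c * u j) \<in> c0 I"
proof (cases "c = 0")
  case True then show ?thesis by (simp add: c0_def)
next
  case False
  have "finite {i\<in>I. e \<le> \<bar>c * u i\<bar>}" if "e > 0" for e
  proof -
    have "{i\<in>I. e \<le> \<bar>c * u i\<bar>} = {i\<in>I. e / \<bar>c\<bar> \<le> \<bar>u i\<bar>}"
      using False by (auto simp: abs_mult field_simps mult.commute)
    then show ?thesis using assms that False unfolding c0_def by auto
  qed
  then show ?thesis using assms unfolding c0_def by auto
qed

lemma key:
  assumes cpt: "compact_space X" and emb: "lin_isometric_embedding I X S"
    and iI: "i \<in> I" and xX: "x \<in> topspace X"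
    and sx: "\<bar>S (\<lambda>j. if j = i then 1 else 0) x\<bar> = 1" and uc: "u \<in> c0 I"
  shows "S u x = S (\<lambda>j. if j = i then 1 else 0) x * u i"
proof -
  define e where "e = (\<lambda>j. if j = i then (1::real) else 0)"
  define s where "s = S e x"
  have s1: "\<bar>s\<bar> = 1" using sx by (simp add: s_def e_def)
  have ss: "s * s = 1" using s1 by (metis abs_mult_self_eq mult_1)
  have Smap: "\<And>u. u \<in> c0 I \<Longrightarrow> S u \<in> cfun X (topspace X)"
   and lin: "linear_on (c0 I) S"
   and iso: "\<And>u. u \<in> c0 I \<Longrightarrow> supn (topspace X) (S u) = supn I u"
    using emb unfolding lin_isometric_embedding_def by auto
  have ec: "e \<in> c0 I"
  proof -
    have "finite {j\<in>I. ep \<le> \<bar>e j\<bar>}" if "ep > 0" for ep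
      by (rule finite_subset[of _ "{i}"]) (use that in \<open>auto simp: e_def split: if_splits\<close>)
    then show ?thesis using iI unfolding c0_def e_def by auto
  qed
  define w where "w = (\<lambda>j. if j = i then 0 else u j)"
  have wc: "w \<in> c0 I"
  proof -
    have "finite {j\<in>I. ep \<le> \<bar>w j\<bar>}" if "ep > 0" for ep
      by (rule finite_subset[of _ "{j\<in>I. ep \<le> \<bar>u j\<bar>}"])
         (use uc that in \<open>auto simp: w_def c0_def split: if_splits\<close>)
    then show ?thesis using uc unfolding c0_def w_def by auto
  qed
  have Sv: "S (\<lambda>j. w j + t * e j) = (\<lambda>y. S w y + t * S e y)" for t
  proof -
    have "S (\<lambda>j. w j + (\<lambda>j. t * e j) j) = (\<lambda>y. S w y + S (\<lambda>j. t * e j) y)"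
      by (rule lin_add[OF lin wc c0_scale[OF ec]])
    moreover have "S (\<lambda>j. t * e j) = (\<lambda>y. t * S e y)"
      by (rule lin_scale[OF lin ec])
    ultimately show ?thesis by simp
  qed
  define a where "a = S w x"
  define T where "T = \<bar>supn I w\<bar> + 1"
  have Tpos: "T > 0" by (simp add: T_def)
  have a0: "a = 0"
  proof (rule ccontr)
    assume "a \<noteq> 0"
    define t where "t = (if a > 0 then s * T else - s * T)"
    have vc: "(\<lambda>j. w j + t * e j) \<in> c0 I" by (rule c0_sum[OF wc c0_scale[OF ec]])
    have "\<bar>t\<bar> = T" using s1 Tpos by (auto simp: t_def abs_mult)
    have "supn I (\<lambda>j. w j + t * e j) \<le> T"
    proof (rule supn_le)
      show "0 \<le> T" using Tpos by simp
      fix j assume "j \<in> I"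
      show "\<bar>w j + t * e j\<bar> \<le> T"
      proof (cases "j = i")
        case True then show ?thesis using \<open>\<bar>t\<bar> = T\<close> by (simp add: w_def e_def)
      next
        case False
        have "\<bar>w j\<bar> \<le> supn I w" using supn_ge[OF c0_bdd[OF wc] \<open>j \<in> I\<close>] .
        then show ?thesis using False by (simp add: e_def T_def)
      qed
    qed
    moreover have "\<bar>S (\<lambda>j. w j + t * e j) x\<bar> \<le> supn (topspace X) (S (\<lambda>j. w j + t * e j))"
      using Smap[OF vc] cpt xX by (intro supn_ge cont_bdd) (auto simp: cfun_top)
    ultimately have "\<bar>a + t * s\<bar> \<le> T" using iso[OF vc] Sv by (simp add: a_def s_def)
    moreover have "t * s = (if a > 0 then T else - T)"
      using ss by (simp add: t_def algebra_simps)
    ultimately show False using \<open>a \<noteq> 0\<close> Tpos by (auto split: if_splits)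
  qed
  have "u = (\<lambda>j. w j + u i * e j)" by (auto simp: w_def e_def)
  then have "S u x = a + u i * s" using Sv by (metis a_def s_def)
  then show ?thesis using a0 by (simp add: s_def e_def)
qed



theorem corollary2p6:
  fixes X :: "'a topology" and I :: "'i set" and S :: "('i \<Rightarrow> real) \<Rightarrow> ('a \<Rightarrow> real)"
  assumes "compact_space X" and "Hausdorff_space X" and "extension_property X"
    and "lin_isometric_embedding I X S"
  shows "complemented_in X (S ` c0 I)"
proof -
  note cpt = assms(1) and emb = assms(4)
  define K where "K = topspace X"
  have Smap: "\<And>u. u \<in> c0 I \<Longrightarrow> S u \<in> cfun X K"
   and lin: "linear_on (c0 I) S"
   and iso: "\<And>u. u \<in> c0 I \<Longrightarrow> supn K (S u) = supn I u"
    using emb unfolding lin_isometric_embedding_def K_def by auto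
  have cK: "h \<in> cfun X K \<longleftrightarrow> continuous_map X euclideanreal h \<and> (\<forall>x. x \<notin> K \<longrightarrow> h x = 0)" for h
    by (simp add: cfun_top K_def)
  have bddK: "bdd_above ((\<lambda>x. \<bar>h x\<bar>) ` K)" if "h \<in> cfun X K" for h
    using cont_bdd[OF cpt] that cK K_def by auto
  define e where "e = (\<lambda>(i::'i) j. if j = i then (1::real) else 0)"
  have ec: "e i \<in> c0 I" if "i \<in> I" for i
  proof -
    have "finite {j\<in>I. ep \<le> \<bar>e i j\<bar>}" if "ep > 0" for ep
      by (rule finite_subset[of _ "{i}"]) (use that in \<open>auto simp: e_def split: if_splits\<close>)
    then show ?thesis using that unfolding c0_def e_def by auto
  qed
  have e1: "supn I (e i) = 1" if "i \<in> I" for i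
  proof -
    have "(\<lambda>x. \<bar>e i x\<bar>) ` I = {1} \<union> (if I - {i} = {} then {} else {0})"
      using that by (auto simp: e_def)
    then have "insert 0 ((\<lambda>x. \<bar>e i x\<bar>) ` I) = {0,1}" by auto
    moreover have "Sup {0::real, 1} = 1" by (intro cSup_eq_maximum) auto
    ultimately show ?thesis by (simp add: supn_def)
  qed
  define f where "f = (\<lambda>i. S (e i))"
  have "\<exists>x\<in>K. \<bar>f i x\<bar> = 1" if "i \<in> I" for i
  proof -
    have s1: "supn K (f i) = 1" using iso[OF ec[OF that]] e1[OF that] by (simp add: f_def)
    have "K \<noteq> {}"
    proof
      assume "K = {}" then have "supn K (f i) = 0" by (simp add: supn_def)
      then show False using s1 by simp
    qed
    then show ?thesis using cont_attains[OF cpt, of "f i"] Smap[OF ec[OF that]] s1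
      by (auto simp: f_def cfun_top K_def)
  qed
  then obtain xs where xs: "\<And>i. i \<in> I \<Longrightarrow> xs i \<in> K \<and> \<bar>f i (xs i)\<bar> = 1" by metis
  have keyI: "S u (xs i) = f i (xs i) * u i" if "u \<in> c0 I" "i \<in> I" for u i
    using key[OF cpt emb that(2), of "xs i" u] xs[OF that(2)] that
    by (simp add: f_def e_def K_def)
  have ss: "f i (xs i) * f i (xs i) = 1" if "i \<in> I" for i
    using xs[OF that] by (metis abs_mult_self_eq mult_1)
  define L where "L = {y\<in>K. \<forall>u\<in>c0 I. S u y = 0}"
  have zc: "(\<lambda>i. 0) \<in> c0 I" by (simp add: c0_def)
  have "L = (\<Inter>u\<in>c0 I. {y \<in> topspace X. S u y \<in> {0}})"
    using zc by (auto simp: L_def K_def)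
  moreover have "closedin X {y \<in> topspace X. S u y \<in> {0}}" if "u \<in> c0 I" for u
    using Smap[OF that] by (intro closedin_continuous_map_preimage) (auto simp: cK)
  ultimately have Lclosed: "closedin X L" using zc by auto
  have "\<exists>E. extension_operator X L E"
  proof (cases "L = {}")
    case False then show ?thesis using assms(3) Lclosed unfolding extension_property_def by blast
  next
    case True
    show ?thesis
    proof (intro exI[of _ "\<lambda>h x. 0"])
      have "supn (topspace X) (\<lambda>x. 0) \<le> 0 * supn L h" for h
        using supn_le[of 0 "topspace X" "\<lambda>x. 0"] by simp
      then show "extension_operator X L (\<lambda>h x. 0)"
        unfolding extension_operator_def linear_on_def using True
        by (auto simp: cfun_def intro!: exI[of _ 0])
    qed
  qed
  then obtain E where E: "extension_operator X L E" by blast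
  have Emap: "\<And>h. h \<in> cfun X L \<Longrightarrow> E h \<in> cfun X K"
   and Elin: "linear_on (cfun X L) E"
   and Eext: "\<And>h x. h \<in> cfun X L \<Longrightarrow> x \<in> L \<Longrightarrow> E h x = h x"
    using E unfolding extension_operator_def K_def by auto
  obtain B where EB: "\<And>h. h \<in> cfun X L \<Longrightarrow> supn K (E h) \<le> B * supn L h"
    using E unfolding extension_operator_def K_def by blast
  define B0 where "B0 = max B 0"
  define restr where "restr = (\<lambda>h x. if x \<in> L then h x else (0::real))"
  have LK: "L \<subseteq> K" by (auto simp: L_def)
  have rc: "restr h \<in> cfun X L" if "h \<in> cfun X K" for h
  proof -
    have "continuous_map (subtopology X L) euclideanreal h"
      using that cK continuous_map_from_subtopology by blast
    then have "continuous_map (subtopology X L) euclideanreal (restr h)"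
      by (rule continuous_map_eq) (auto simp: restr_def)
    then show ?thesis by (auto simp: cfun_def restr_def)
  qed
  have radd: "restr (\<lambda>x. h1 x + h2 x) = (\<lambda>x. restr h1 x + restr h2 x)" for h1 h2
    by (auto simp: restr_def)
  have rsc: "restr (\<lambda>x. c * h x) = (\<lambda>x. c * restr h x)" for c h
    by (auto simp: restr_def)
  define g where "g = (\<lambda>h x. h x - E (restr h) x)"
  have gcont: "continuous_map X euclideanreal (g h)" if "h \<in> cfun X K" for h
    using that Emap[OF rc[OF that]] unfolding g_def cK by (intro continuous_intros) auto
  have gL: "g h y = 0" if "h \<in> cfun X K" "y \<in> L" for h y
    using Eext[OF rc[OF that(1)] that(2)] that(2) by (simp add: g_def restr_def)
  define coef where "coef = (\<lambda>h i. if i \<in> I then f i (xs i) * g h (xs i) else 0)"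
  define P where "P = (\<lambda>h. S (coef h))"
  have coefabs: "\<bar>coef h i\<bar> = \<bar>g h (xs i)\<bar>" if "i \<in> I" for h i
    using xs[OF that] that by (simp add: coef_def abs_mult)
  have coefc0: "coef h \<in> c0 I" if hK: "h \<in> cfun X K" for h
  proof -
    have "finite {i\<in>I. ep \<le> \<bar>coef h i\<bar>}" if "ep > 0" for ep
    proof -
      define C where "C = {x \<in> topspace X. g h x \<in> {t. ep \<le> \<bar>t\<bar>}}"
      have "closed {t::real. ep \<le> \<bar>t\<bar>}"
        by (intro closed_Collect_le continuous_intros)
      then have "closedin X C" unfolding C_def
        by (intro closedin_continuous_map_preimage[OF gcont[OF hK]]) auto
      then have cC: "compactin X C" using closedin_compact_space[OF cpt] by blast
      define U where "U = {V. openin X V \<and> finite {i\<in>I. xs i \<in> V}}"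
      have "C \<subseteq> \<Union>U"
      proof
        fix z assume zC: "z \<in> C"
        then have "g h z \<noteq> 0" using that by (auto simp: C_def)
        then have "z \<notin> L" using gL[OF hK] by auto
        then obtain u where uc: "u \<in> c0 I" and nz: "S u z \<noteq> 0"
          using zC by (auto simp: L_def C_def K_def)
        define V where "V = {x \<in> topspace X. S u x \<in> {t. \<bar>S u z\<bar>/2 < \<bar>t\<bar>}}"
        have "open {t::real. \<bar>S u z\<bar>/2 < \<bar>t\<bar>}"
          by (intro open_Collect_less continuous_intros)
        then have "openin X V" unfolding V_def
          using Smap[OF uc] by (intro openin_continuous_map_preimage) (auto simp: cK)
        moreover have "finite {i\<in>I. xs i \<in> V}"
        proof (rule finite_subset)
          show "{i\<in>I. xs i \<in> V} \<subseteq> {i\<in>I. \<bar>S u z\<bar>/2 \<le> \<bar>u i\<bar>}"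
          proof clarify
            fix i assume "i \<in> I" "xs i \<in> V"
            then have "\<bar>S u z\<bar>/2 < \<bar>S u (xs i)\<bar>" by (simp add: V_def)
            also have "\<bar>S u (xs i)\<bar> = \<bar>u i\<bar>" using keyI[OF uc \<open>i \<in> I\<close>] xs[OF \<open>i \<in> I\<close>]
              by (simp add: abs_mult)
            finally show "\<bar>S u z\<bar>/2 \<le> \<bar>u i\<bar>" by simp
          qed
          show "finite {i\<in>I. \<bar>S u z\<bar>/2 \<le> \<bar>u i\<bar>}" 
          proof -
            have "\<bar>S u z\<bar>/2 > 0" using nz by simp
            then show ?thesis using uc unfolding c0_def by blast
          qed
        qed
        moreover have "z \<in> V" using zC nz by (auto simp: V_def C_def)
        ultimately show "z \<in> \<Union>U" by (auto simp: U_def)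
      qed
      then obtain F where F: "finite F" "F \<subseteq> U" "C \<subseteq> \<Union>F"
        using compactinD[OF cC, of U] by (auto simp: U_def)
      have "{i\<in>I. ep \<le> \<bar>coef h i\<bar>} \<subseteq> (\<Union>V\<in>F. {i\<in>I. xs i \<in> V})"
      proof (rule subsetI)
        fix i assume "i \<in> {i\<in>I. ep \<le> \<bar>coef h i\<bar>}"
        then have iI: "i \<in> I" and "ep \<le> \<bar>coef h i\<bar>" by auto
        then have "xs i \<in> C" using coefabs xs by (auto simp: C_def K_def)
        then show "i \<in> (\<Union>V\<in>F. {i\<in>I. xs i \<in> V})" using F(3) iI by auto
      qed
      moreover have "finite (\<Union>V\<in>F. {i\<in>I. xs i \<in> V})" using F(1,2) by (auto simp: U_def)
      ultimately show ?thesis by (rule finite_subset)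
    qed
    then show ?thesis by (auto simp: c0_def coef_def)
  qed
  have coefadd: "coef (\<lambda>x. h1 x + h2 x) = (\<lambda>i. coef h1 i + coef h2 i)"
    if "h1 \<in> cfun X K" "h2 \<in> cfun X K" for h1 h2
  proof -
    have "E (restr (\<lambda>x. h1 x + h2 x)) = (\<lambda>y. E (restr h1) y + E (restr h2) y)"
      unfolding radd by (rule lin_add[OF Elin rc[OF that(1)] rc[OF that(2)]])
    then show ?thesis by (auto simp: coef_def g_def algebra_simps)
  qed
  have coefsc: "coef (\<lambda>x. c * h x) = (\<lambda>i. c * coef h i)" if "h \<in> cfun X K" for c h
  proof -
    have "E (restr (\<lambda>x. c * h x)) = (\<lambda>y. c * E (restr h) y)"
      unfolding rsc by (rule lin_scale[OF Elin rc[OF that]])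
    then show ?thesis by (auto simp: coef_def g_def algebra_simps)
  qed
  have Plin: "linear_on (cfun X K) P"
    unfolding linear_on_def P_def
    using coefadd coefsc lin_add[OF lin] lin_scale[OF lin] coefc0 by simp
  have Pmap: "P h \<in> cfun X K" if "h \<in> cfun X K" for h
    using Smap coefc0 that by (simp add: P_def)
  have Pbd: "supn K (P h) \<le> (1 + B0) * supn K h" if hK: "h \<in> cfun X K" for h
  proof -
    have sh0: "0 \<le> supn K h" using supn_nonneg[OF bddK[OF hK]] .
    have B0: "0 \<le> B0" by (simp add: B0_def)
    have "supn I (coef h) \<le> (1 + B0) * supn K h"
    proof (rule supn_le)
      show "0 \<le> (1 + B0) * supn K h" using sh0 B0 by simp
      fix i assume iI: "i \<in> I"
      have xK: "xs i \<in> K" using xs[OF iI] by simp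
      have rb: "bdd_above ((\<lambda>x. \<bar>restr h x\<bar>) ` L)"
        using bddK[OF hK] LK by (auto simp: restr_def bdd_above_def)
      have rL: "supn L (restr h) \<le> supn K h"
        using sh0 LK supn_ge[OF bddK[OF hK]] by (intro supn_le) (auto simp: restr_def)
      have "supn K (E (restr h)) \<le> B * supn L (restr h)" using EB[OF rc[OF hK]] .
      also have "\<dots> \<le> B0 * supn L (restr h)"
        using supn_nonneg[OF rb] by (intro mult_right_mono) (auto simp: B0_def)
      also have "\<dots> \<le> B0 * supn K h" using rL B0 by (intro mult_left_mono)
      finally have eb: "supn K (E (restr h)) \<le> B0 * supn K h" .
      have "\<bar>coef h i\<bar> = \<bar>h (xs i) - E (restr h) (xs i)\<bar>" using coefabs[OF iI] by (simp add: g_def)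
      also have "\<dots> \<le> \<bar>h (xs i)\<bar> + \<bar>E (restr h) (xs i)\<bar>" by simp
      also have "\<dots> \<le> supn K h + supn K (E (restr h))"
        using supn_ge[OF bddK[OF hK] xK] supn_ge[OF bddK[OF Emap[OF rc[OF hK]]] xK] by simp
      finally show "\<bar>coef h i\<bar> \<le> (1 + B0) * supn K h" using eb by (simp add: algebra_simps)
    qed
    then show ?thesis using iso[OF coefc0[OF hK]] by (simp add: P_def)
  qed
  have Pfix: "P (S u) = S u" if uc: "u \<in> c0 I" for u
  proof -
    have r0: "restr (S u) = (\<lambda>x. 0 * (0::real))" by (auto simp: restr_def L_def uc)
    have "(\<lambda>x. 0::real) \<in> cfun X L" by (simp add: cfun_def)
    then have "E (restr (S u)) = (\<lambda>y. 0)" unfolding r0 using lin_scale[OF Elin, of "\<lambda>x. 0" 0] by simp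
    then have "coef (S u) = u" using keyI[OF uc] ss uc
      by (auto simp: coef_def g_def c0_def mult.assoc[symmetric])
    then show ?thesis by (simp add: P_def)
  qed
  have Pimg: "P ` cfun X K = S ` c0 I"
  proof
    show "P ` cfun X K \<subseteq> S ` c0 I" using coefc0 by (auto simp: P_def)
    show "S ` c0 I \<subseteq> P ` cfun X K"
    proof clarify
      fix u assume "u \<in> c0 I"
      then show "S u \<in> P ` cfun X K" using Pfix Smap by (metis image_eqI)
    qed
  qed
  show ?thesis
    unfolding complemented_in_def K_def[symmetric]
    using Pmap Plin Pbd Pimg Pfix by blast
qed

end
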